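(* Let $\mathcal G$ be a Lie superalgebra over a field of characteristic zero, with a direct sum decomposition $\mathcal G=\mathcal H\oplus\mathcal E$ of vector spaces where $\mathcal H$ is a subalgebra. Let $\mathcal S$, the projections $A\mapsto A_{\mathcal H}$, and the extended bracket $[\cdot,\cdot]$ be as described below. Then for any $A,B\in\mathcal S$, $[A_{\mathcal H},B_{\mathcal H}]=[A_{\mathcal H},B_{\mathcal H}]_{\mathcal H}$. Thus the subspace $\mathcal S_{\mathcal H}$ of the Lie superalgebra $(\mathcal S,[\cdot,\cdot])$ is a subalgebra.
   Context: Set $\mathcal U_1=\mathcal G$ with its $\mathbb Z_2$-grading. For $p\ge1$ define recursively $\mathcal U_{-p+1}=\mathrm{Hom}(\mathcal U_1,\mathcal U_{-p+2})$, $\mathbb Z_2$-graded by declaring $A$ even (resp. odd) if it preserves (resp. reverses) parity; $|u|$ is the parity of a homogeneous element. Elements of $\mathcal U_{1-p}$ are operators of order $p$ (elements of $\mathcal G$ have order $0$), identified for $p\ge1$ with $p$-linear maps $A(x_1,\dots,x_p)=A(x_1)\cdots(x_p)$; $\mathcal U_{1-}=\bigoplus_{p\ge0}\mathcal U_{1-p}$. An operator of order $p\ge2$ is symmetric if $A(\dots,x_i,x_{i+1},\dots)=(-1)^{|x_i||x_{i+1}|}A(\dots,x_{i+1},x_i,\dots)$ for all homogeneous arguments and all $i$; operators of order $0$ or $1$ are symmetric; $\mathcal S$ is the span of symmetric operators. Define $\circ$: $A\circ y=A(y)$, $y\circ A=0$ for $A$ of order $\ge1$, $y\in\mathcal U_1$;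 for $A,B$ of orders $\ge1$, recursively $(A\circ B)(x)=A\circ B(x)+(-1)^{|B||x|}A(x)\circ B$. Define $\bullet$: $A_p\bullet B_q=\frac{p!q!}{(p+q-1)!}A_p\circ B_q$ for orders $p,q\ge1$; $A_p\bullet x=pA_p(x)$, $x\bullet A_p=0$, $x\bullet y=0$ for $x,y\in\mathcal U_1$. The bracket of $\mathcal G$ extends to $\mathcal U_{1-}$: on $\mathcal G$ it is the given bracket, and for operators $A,B$ of orders $p,q$ with $p+q\ge1$, $[A,B]$ is the operator of order $p+q$ defined recursively by $[A,B]\bullet x=[A,B\bullet x]+(-1)^{|x||B|}[A\bullet x,B]$ for all $x\in\mathcal G$; $\mathcal S$ is closed under this bracket. For $x\in\mathcal G$ write $x=x_{\mathcal H}+x_{\mathcal E}$ with $x_{\mathcal H}\in\mathcal H$, $x_{\mathcal E}\in\mathcal E$. For an operator $A$ of order $\ge1$ define $A_{\mathcal H},A_{\mathcal E}$ recursively by $A_{\mathcal H}\bullet x=(A\bullet x)_{\mathcal H}$, $A_{\mathcal E}\bullet x=(A\bullet x)_{\mathcal E}$ for all $x\in\mathcal G$ (equivalently $A_{\mathcal H}(x_1,\dots,x_p)=(A(x_1,\dots,x_p))_{\mathcal H}$, similarly for $\mathcal E$). $\mathcal S_{\mathcal H}$ (resp. $\mathcal S_{\mathcal E}$) is the span of all $A_{\mathcal H}$ (resp. $A_{\mathcal E}$) with $A\in\mathcal S$. *)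

theory Defs
  imports Main "HOL.Vector_Spaces"
begin

text \<open>The field is a type 'k of class field_char_0; the superalgebra is the whole
  type 'g, a vector space via the scalar multiplication sc.  Parities are booleans
  (False = even, True = odd).\<close>

definition gpart :: "'g set \<Rightarrow> 'g set \<Rightarrow> bool \<Rightarrow> 'g set" where
  "gpart G0 G1 e = (if e then G1 else G0)"

definition sgn :: "bool \<Rightarrow> bool \<Rightarrow> 'k::field" where
  "sgn a b = (if a \<and> b then -1 else 1)"

definition lie_superalgebra ::
  "('k::field_char_0 \<Rightarrow> 'g::ab_group_add \<Rightarrow> 'g) \<Rightarrow> 'g set \<Rightarrow> 'g set \<Rightarrow> ('g \<Rightarrow> 'g \<Rightarrow> 'g) \<Rightarrow> bool" where
  "lie_superalgebra sc G0 G1 br \<longleftrightarrow>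
     vector_space sc \<and> module.subspace sc G0 \<and> module.subspace sc G1 \<and>
     G0 \<inter> G1 = {0} \<and> (\<forall>x. \<exists>a\<in>G0. \<exists>b\<in>G1. x = a + b) \<and>
     (\<forall>x y z. br (x + y) z = br x z + br y z) \<and>
     (\<forall>x y z. br x (y + z) = br x y + br x z) \<and>
     (\<forall>c x y. br (sc c x) y = sc c (br x y)) \<and>
     (\<forall>c x y. br x (sc c y) = sc c (br x y)) \<and>
     (\<forall>a b x y. x \<in> gpart G0 G1 a \<longrightarrow> y \<in> gpart G0 G1 b \<longrightarrow> br x y \<in> gpart G0 G1 (a \<noteq> b)) \<and>
     (\<forall>a b x y. x \<in> gpart G0 G1 a \<longrightarrow> y \<in> gpart G0 G1 b \<longrightarrow> br x y = - sc (sgn a b) (br y x)) \<and>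
     (\<forall>a b x y z. x \<in> gpart G0 G1 a \<longrightarrow> y \<in> gpart G0 G1 b \<longrightarrow>
        br x (br y z) = br (br x y) z + sc (sgn a b) (br y (br x z)))"

definition pproj :: "'g set \<Rightarrow> 'g set \<Rightarrow> bool \<Rightarrow> 'g::ab_group_add \<Rightarrow> 'g" where
  "pproj G0 G1 e x = (THE y. y \<in> gpart G0 G1 e \<and> x - y \<in> gpart G0 G1 (\<not> e))"

text \<open>An operator of order p is represented by its p-linear map A(x1,...,xp),
  i.e. a function on argument lists, required to vanish on lists of length \<noteq> p.
  An operator of order 0 is an element y of G, represented by the function
  sending [] to y.\<close>

definition op_ml :: "('k::field \<Rightarrow> 'g::ab_group_add \<Rightarrow> 'g) \<Rightarrow> nat \<Rightarrow> ('g list \<Rightarrow> 'g) \<Rightarrow> bool" where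
  "op_ml sc p f \<longleftrightarrow>
     (\<forall>xs. length xs \<noteq> p \<longrightarrow> f xs = 0) \<and>
     (\<forall>as bs c x y. length as + length bs + 1 = p \<longrightarrow>
        f (as @ (sc c x + y) # bs) = sc c (f (as @ x # bs)) + f (as @ y # bs))"

text \<open>Parity-f part of an operator of order p: on homogeneous arguments of parities es,
  take the component of parity f + sum es; extend multilinearly.\<close>
definition opar :: "'g set \<Rightarrow> 'g set \<Rightarrow> nat \<Rightarrow> ('g::ab_group_add list \<Rightarrow> 'g) \<Rightarrow> bool \<Rightarrow> 'g list \<Rightarrow> 'g" where
  "opar G0 G1 p A f = (\<lambda>xs. if length xs = p then
      (\<Sum>es\<in>{es::bool list. length es = p}.
          pproj G0 G1 (foldr (\<noteq>) es f) (A (map2 (pproj G0 G1) es xs)))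
      else 0)"

definition bsum2 :: "(bool \<Rightarrow> bool \<Rightarrow> 'g::comm_monoid_add) \<Rightarrow> 'g" where
  "bsum2 F = F False False + F False True + F True False + F True True"

text \<open>The bracket of an operator A of order p with an operator B of order q,
  defined by the recursion
   [A,B] \<bullet> x = [A, B \<bullet> x] + (-1)^(|x||B|) [A \<bullet> x, B],
  with A \<bullet> x = p A(x) and y \<bullet> x = 0 for y of order 0, i.e.
   (p+q) [A,B](x) = q [A, B(x)] + p (-1)^(|x||B|) [A(x), B],
  extended bilinearly to non-homogeneous x and B.\<close>
function brk :: "('k::field_char_0 \<Rightarrow> 'g::ab_group_add \<Rightarrow> 'g) \<Rightarrow> 'g set \<Rightarrow> 'g set \<Rightarrow> ('g \<Rightarrow> 'g \<Rightarrow> 'g)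
     \<Rightarrow> nat \<Rightarrow> nat \<Rightarrow> ('g list \<Rightarrow> 'g) \<Rightarrow> ('g list \<Rightarrow> 'g) \<Rightarrow> 'g list \<Rightarrow> 'g" where
  "brk sc G0 G1 br p q A B = (\<lambda>xs.
     if p = 0 \<and> q = 0 then (if xs = [] then br (A []) (B []) else 0)
     else if length xs \<noteq> p + q then 0
     else sc (1 / of_nat (p + q))
           ((if q = 0 then 0 else
               sc (of_nat q) (brk sc G0 G1 br p (q - 1) A (\<lambda>zs. B (hd xs # zs)) (tl xs)))
          + (if p = 0 then 0 else
               sc (of_nat p) (bsum2 (\<lambda>e f. sc (sgn e f)
                  (brk sc G0 G1 br (p - 1) q (\<lambda>zs. A (pproj G0 G1 e (hd xs) # zs))
                       (opar G0 G1 q B f) (tl xs)))))))"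
  by pat_completeness auto
termination
  by (relation "measure (\<lambda>(_, _, _, _, p, q, _, _). p + q)") auto

text \<open>An element of U_{1-} = \<Oplus>_p U_{1-p}: a family of operators indexed by the order p,
  finitely many nonzero.\<close>
definition in_U :: "('k::field \<Rightarrow> 'g::ab_group_add \<Rightarrow> 'g) \<Rightarrow> (nat \<Rightarrow> 'g list \<Rightarrow> 'g) \<Rightarrow> bool" where
  "in_U sc A \<longleftrightarrow> finite {p. A p \<noteq> (\<lambda>_. 0)} \<and> (\<forall>p. op_ml sc p (A p))"

definition ubr :: "('k::field_char_0 \<Rightarrow> 'g::ab_group_add \<Rightarrow> 'g) \<Rightarrow> 'g set \<Rightarrow> 'g set \<Rightarrow> ('g \<Rightarrow> 'g \<Rightarrow> 'g)
     \<Rightarrow> (nat \<Rightarrow> 'g list \<Rightarrow> 'g) \<Rightarrow> (nat \<Rightarrow> 'g list \<Rightarrow> 'g) \<Rightarrow> nat \<Rightarrow> 'g list \<Rightarrow> 'g" where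
  "ubr sc G0 G1 br A B = (\<lambda>n xs. \<Sum>p\<le>n. brk sc G0 G1 br p (n - p) (A p) (B (n - p)) xs)"

definition symmetric_op :: "('k::field \<Rightarrow> 'g::ab_group_add \<Rightarrow> 'g) \<Rightarrow> 'g set \<Rightarrow> 'g set \<Rightarrow> nat \<Rightarrow> ('g list \<Rightarrow> 'g) \<Rightarrow> bool" where
  "symmetric_op sc G0 G1 p f \<longleftrightarrow>
     (2 \<le> p \<longrightarrow> (\<forall>xs es i. length xs = p \<longrightarrow> length es = p \<longrightarrow>
        (\<forall>j<p. xs ! j \<in> gpart G0 G1 (es ! j)) \<longrightarrow> Suc i < p \<longrightarrow>
        f xs = sc (sgn (es ! i) (es ! Suc i)) (f (xs[i := xs ! Suc i, Suc i := xs ! i]))))"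

inductive_set Sspan :: "('k::field \<Rightarrow> 'g::ab_group_add \<Rightarrow> 'g) \<Rightarrow> 'g set \<Rightarrow> 'g set \<Rightarrow> (nat \<Rightarrow> 'g list \<Rightarrow> 'g) set"
  for sc G0 G1 where
  zero: "(\<lambda>_ _. 0) \<in> Sspan sc G0 G1"
| gen: "op_ml sc p f \<Longrightarrow> symmetric_op sc G0 G1 p f \<Longrightarrow>
          (\<lambda>n. if n = p then f else (\<lambda>_. 0)) \<in> Sspan sc G0 G1"
| add: "A \<in> Sspan sc G0 G1 \<Longrightarrow> B \<in> Sspan sc G0 G1 \<Longrightarrow> (\<lambda>n xs. A n xs + B n xs) \<in> Sspan sc G0 G1"
| smul: "A \<in> Sspan sc G0 G1 \<Longrightarrow> (\<lambda>n xs. sc c (A n xs)) \<in> Sspan sc G0 G1"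

definition hproj :: "'g set \<Rightarrow> 'g set \<Rightarrow> 'g::ab_group_add \<Rightarrow> 'g" where
  "hproj H E x = (THE h. h \<in> H \<and> x - h \<in> E)"

definition uproj :: "'g set \<Rightarrow> 'g set \<Rightarrow> (nat \<Rightarrow> 'g::ab_group_add list \<Rightarrow> 'g) \<Rightarrow> nat \<Rightarrow> 'g list \<Rightarrow> 'g" where
  "uproj H E A = (\<lambda>n xs. hproj H E (A n xs))"

end

theory Submission
  imports Defs
begin

lemma pproj_in_H:
  fixes sc :: "'k::field_char_0 \<Rightarrow> 'g::ab_group_add \<Rightarrow> 'g"
  assumes L: "lie_superalgebra sc G0 G1 br"
    and SH: "module.subspace sc H"
    and P: "\<forall>h\<in>H. pproj G0 G1 False h \<in> H"
    and h: "h \<in> H"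
  shows "pproj G0 G1 e h \<in> H"
proof (cases e)
  case False thus ?thesis using P h by simp
next
  case True
  from L interpret vector_space sc by (simp add: lie_superalgebra_def)
  have S0: "subspace G0" and S1: "subspace G1" and I: "G0 \<inter> G1 = {0}"
    and D: "\<forall>x. \<exists>a\<in>G0. \<exists>b\<in>G1. x = a + b" using L by (auto simp: lie_superalgebra_def)
  obtain a b where ab: "a \<in> G0" "b \<in> G1" "h = a + b" using D by blast
  have uF: "pproj G0 G1 False h = a"
    unfolding pproj_def gpart_def
  proof (rule the_equality)
    show "a \<in> (if False then G1 else G0) \<and> h - a \<in> (if \<not> False then G1 else G0)"
      using ab by simp
  next
    fix y assume y: "y \<in> (if False then G1 else G0) \<and> h - y \<in> (if \<not> False then G1 else G0)"
    then have y0: "y \<in> G0" and y1: "h - y \<in> G1" by auto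
    have m1: "y - a \<in> G0" using subspace_diff[OF S0 y0 ab(1)] .
    have eqy: "y - a = b - (h - y)" using ab by (simp add: algebra_simps)
    have "b - (h - y) \<in> G1" using subspace_diff[OF S1 ab(2) y1] .
    then have m2: "y - a \<in> G1" unfolding eqy .
    have "y - a = 0" using I m1 m2 by blast
    thus "y = a" by simp
  qed
  have uT: "pproj G0 G1 True h = b"
    unfolding pproj_def gpart_def
  proof (rule the_equality)
    show "b \<in> (if True then G1 else G0) \<and> h - b \<in> (if \<not> True then G1 else G0)"
      using ab by simp
  next
    fix y assume y: "y \<in> (if True then G1 else G0) \<and> h - y \<in> (if \<not> True then G1 else G0)"
    then have y1: "y \<in> G1" and y0: "h - y \<in> G0" by auto
    have m1: "y - b \<in> G1" using subspace_diff[OF S1 y1 ab(2)] .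
    have eqy: "y - b = a - (h - y)" using ab by (simp add: algebra_simps)
    have "a - (h - y) \<in> G0" using subspace_diff[OF S0 ab(1) y0] .
    then have m2: "y - b \<in> G0" unfolding eqy .
    have "y - b = 0" using I m1 m2 by blast
    thus "y = b" by simp
  qed
  have "b = h - pproj G0 G1 False h" using uF ab by simp
  then have "b \<in> H" using subspace_diff[OF SH h] P h by simp
  thus ?thesis using True uT by simp
qed

lemma hproj_eq:
  fixes sc :: "'k::field_char_0 \<Rightarrow> 'g::ab_group_add \<Rightarrow> 'g"
  assumes V: "vector_space sc"
    and SH: "module.subspace sc H" and SE: "module.subspace sc E"
    and I: "H \<inter> E = {0}" and h: "h \<in> H" and e: "x - h \<in> E"
  shows "hproj H E x = h"
proof -
  interpret vector_space sc by (rule V)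
  show ?thesis unfolding hproj_def
  proof (rule the_equality)
    show "h \<in> H \<and> x - h \<in> E" using h e by simp
  next
    fix y assume y: "y \<in> H \<and> x - y \<in> E"
    have "y - h \<in> H" using y h subspace_diff[OF SH] by auto
    moreover have "y - h \<in> E"
    proof -
      have eq: "y - h = (x - h) - (x - y)" by (simp add: algebra_simps)
      have "(x - h) - (x - y) \<in> E" using subspace_diff[OF SE e conjunct2[OF y]] .
      thus ?thesis by (subst eq)
    qed
    ultimately have "y - h = 0" using I by blast
    thus "y = h" by simp
  qed
qed

declare brk.simps[simp del]

lemma brk_in_H:
  fixes sc :: "'k::field_char_0 \<Rightarrow> 'g::ab_group_add \<Rightarrow> 'g"
  assumes L: "lie_superalgebra sc G0 G1 br"
    and SH: "module.subspace sc H"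
    and P: "\<forall>h\<in>H. pproj G0 G1 False h \<in> H"
    and BH: "\<forall>x\<in>H. \<forall>y\<in>H. br x y \<in> H"
  shows "\<forall>p q (A::'g list \<Rightarrow> 'g) (B::'g list \<Rightarrow> 'g) xs. p + q = n \<longrightarrow> (\<forall>zs. A zs \<in> H) \<longrightarrow> (\<forall>zs. B zs \<in> H) \<longrightarrow> brk sc G0 G1 br p q A B xs \<in> H"
proof (induction n rule: less_induct)
  case (less n)
  from L interpret vector_space sc by (simp add: lie_superalgebra_def)
  show ?case
  proof (intro allI impI)
    fix p q xs and A B :: "'g list \<Rightarrow> 'g"
    assume n: "p + q = n" and A: "\<forall>zs. A zs \<in> H" and B: "\<forall>zs. B zs \<in> H"
    have opH: "opar G0 G1 q B f zs \<in> H" for f zs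
      unfolding opar_def
      by (auto intro!: subspace_sum[OF SH] pproj_in_H[OF L SH P] simp: B subspace_0[OF SH])
    show "brk sc G0 G1 br p q A B xs \<in> H"
    proof (cases "p = 0 \<and> q = 0")
      case True
      then show ?thesis using A B BH subspace_0[OF SH] by (subst brk.simps) simp
    next
      case False
      have t1: "(if q = 0 then 0 else
               sc (of_nat q) (brk sc G0 G1 br p (q - 1) A (\<lambda>zs. B (hd xs # zs)) (tl xs))) \<in> H"
        using less.IH[of "p + (q - 1)"] n False A B subspace_0[OF SH] subspace_scale[OF SH] by auto
      have t2: "(if p = 0 then 0 else
               sc (of_nat p) (bsum2 (\<lambda>e f. sc (sgn e f)
                  (brk sc G0 G1 br (p - 1) q (\<lambda>zs. A (pproj G0 G1 e (hd xs) # zs))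
                       (opar G0 G1 q B f) (tl xs))))) \<in> H"
      proof (cases "p = 0")
        case True thus ?thesis using subspace_0[OF SH] by simp
      next
        case pn: False
        have "brk sc G0 G1 br (p - 1) q (\<lambda>zs. A (pproj G0 G1 e (hd xs) # zs))
                       (opar G0 G1 q B f) (tl xs) \<in> H" for e f
          using less.IH[of "p - 1 + q"] n pn A opH by auto
        then show ?thesis using pn subspace_scale[OF SH] subspace_add[OF SH]
          unfolding bsum2_def by simp
      qed
      show ?thesis
        apply (subst brk.simps, simp only: if_not_P[OF False])
        using False t1 t2 subspace_0[OF SH] subspace_scale[OF SH] subspace_add[OF SH]
        by simp
    qed
  qed
qed

theorem proposition5p1:
  fixes sc :: "'k::field_char_0 \<Rightarrow> 'g::ab_group_add \<Rightarrow> 'g"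
    and G0 G1 H E :: "'g set" and br :: "'g \<Rightarrow> 'g \<Rightarrow> 'g"
    and A B :: "nat \<Rightarrow> 'g list \<Rightarrow> 'g"
  assumes "lie_superalgebra sc G0 G1 br"
    and "module.subspace sc H" and "module.subspace sc E"
    and "H \<inter> E = {0}" and "\<forall>x. \<exists>h\<in>H. \<exists>e\<in>E. x = h + e"
    and "\<forall>h\<in>H. pproj G0 G1 False h \<in> H"
    and "\<forall>x\<in>H. \<forall>y\<in>H. br x y \<in> H"
    and "A \<in> Sspan sc G0 G1" and "B \<in> Sspan sc G0 G1"
  shows "ubr sc G0 G1 br (uproj H E A) (uproj H E B)
       = uproj H E (ubr sc G0 G1 br (uproj H E A) (uproj H E B))"
proof -
  have V: "vector_space sc" using assms(1) by (simp add: lie_superalgebra_def)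
  interpret vector_space sc by (rule V)
  have hH: "hproj H E x \<in> H" for x
  proof -
    obtain h e where "h \<in> H" "e \<in> E" "x = h + e" using assms(5) by blast
    then have "hproj H E x = h" using hproj_eq[OF V assms(2,3,4)] by simp
    thus ?thesis using \<open>h \<in> H\<close> by simp
  qed
  have uH: "ubr sc G0 G1 br (uproj H E A) (uproj H E B) n xs \<in> H" for n xs
    unfolding ubr_def
    apply (rule subspace_sum[OF assms(2)])
    using brk_in_H[OF assms(1,2,6,7)] hH
    by (simp add: uproj_def)
  show ?thesis
    apply (rule ext, rule ext)
    unfolding uproj_def[of H E "ubr sc G0 G1 br (uproj H E A) (uproj H E B)"]
    by (rule sym, rule hproj_eq[OF V assms(2,3,4) uH]) (simp add: subspace_0[OF assms(3)])
qed

end
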